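(* Let $\mathcal{H}$ be a real Hilbert space of dimension $d$, $G>0$, $\mathcal{G}=\{g\in\mathcal{H}:\|g\|\le G\}$, $\theta\in\mathcal{H}$ fixed, and $h:\mathbb{R}\to\mathbb{R}$ an even convex function that is increasing on $[0,\infty)$. Consider the one-round game \[ H=\min_{w\in\mathcal{H}}\max_{g\in\mathcal{G}}\ \langle w,g\rangle+h(\|\theta-g\|). \] If $d=1$, or if $d>1$, $h$ is twice differentiable, and $h''(x)>h'(x)/x$ for all $x>0$, then \[ H=\frac{h(\|\theta\|+G)+h(\|\theta\|-G)}{2}\qquad\text{and}\qquad w^*=\hat\theta\,\frac{h(\|\theta\|+G)-h(\|\theta\|-G)}{2G}, \] and any $g^*$ with $|\langle\theta,g^*\rangle|=G\|\theta\|$ and $\|g^*\|=G$ is a minimax play for the adversary.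
   Context: Write $H(w,g)=\langle w,g\rangle+h(\|\theta-g\|)$. $w^*=\arg\min_w\max_{g\in\mathcal{G}}H(w,g)$ is the minimax play of the player, and a minimax play of the adversary is a $g^*\in\arg\max_{g\in\mathcal{G}}H(w^*,g)$. $\hat\theta=\theta/\|\theta\|$ if $\theta\ne0$ and $\hat\theta=0$ otherwise. *)

theory Defs
  imports "HOL-Analysis.Analysis"
begin

definition game_payoff :: "(real \<Rightarrow> real) \<Rightarrow> 'a::real_inner \<Rightarrow> 'a \<Rightarrow> 'a \<Rightarrow> real" where
  "game_payoff h \<theta> w g = inner w g + h (norm (\<theta> - g))"

definition adv_set :: "real \<Rightarrow> 'a::real_normed_vector set" where
  "adv_set G = {g. norm g \<le> G}"

definition worst_payoff :: "(real \<Rightarrow> real) \<Rightarrow> 'a::real_inner \<Rightarrow> real \<Rightarrow> 'a \<Rightarrow> real" where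
  "worst_payoff h \<theta> G w = (SUP g\<in>adv_set G. game_payoff h \<theta> w g)"

definition minimax_value :: "(real \<Rightarrow> real) \<Rightarrow> 'a::real_inner \<Rightarrow> real \<Rightarrow> real" where
  "minimax_value h \<theta> G = (INF w. worst_payoff h \<theta> G w)"

definition unit_dir :: "'a::real_normed_vector \<Rightarrow> 'a" where
  "unit_dir \<theta> = (if \<theta> = 0 then 0 else (1 / norm \<theta>) *\<^sub>R \<theta>)"

end

theory Submission imports Defs begin

lemma chord:
  fixes \<psi> :: "real \<Rightarrow> real"
  assumes cv: "convex_on {-G..G} \<psi>" and G: "G > 0" and a: "-G \<le> a" "a \<le> G"
  shows "(\<psi> (-G) - \<psi> G) / (2*G) * a + \<psi> a \<le> (\<psi> (-G) + \<psi> G) / 2"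
proof -
  define t where "t = (G - a) / (2*G)"
  have t01: "0 \<le> t" "t \<le> 1" using a G by (auto simp: t_def field_simps)
  have at: "a = (1 - t) *\<^sub>R G + t *\<^sub>R (-G)" using G by (simp add: t_def field_simps)
  have "\<psi> a \<le> (1 - t) * \<psi> G + t * \<psi> (-G)"
    using convex_onD[OF cv t01, of G "-G"] G at by simp
  moreover have "(\<psi> (-G) - \<psi> G) / (2*G) * a = (\<psi> (-G) - \<psi> G) * (1 - 2*t) / 2"
    using G by (simp add: t_def field_simps)
  ultimately show ?thesis by (simp add: algebra_simps)
qed

lemma convex_affine_comp:
  fixes f :: "real \<Rightarrow> real"
  assumes cv: "convex_on T f" and S: "convex S" and map: "\<And>x. x \<in> S \<Longrightarrow> p + q * x \<in> T"
  shows "convex_on S (\<lambda>x. f (p + q * x))"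
proof (rule convex_onI[OF _ S])
  fix t x y :: real assume t: "0 < t" "t < 1" and xy: "x \<in> S" "y \<in> S"
  have "p + q * ((1 - t) *\<^sub>R x + t *\<^sub>R y) = (1 - t) *\<^sub>R (p + q*x) + t *\<^sub>R (p + q*y)"
    by (simp add: algebra_simps)
  then show "f (p + q * ((1 - t) *\<^sub>R x + t *\<^sub>R y)) \<le> (1 - t) * f (p + q * x) + t * f (p + q * y)"
    using convex_onD[OF cv, of t "p+q*x" "p+q*y"] t map xy by simp
qed

lemma convex_extend0:
  fixes f :: "real \<Rightarrow> real"
  assumes cv: "convex_on {0<..} f" and ct: "continuous_on {0..} f"
  shows "convex_on {0..} f"
proof (rule convex_on_linorderI)
  show "convex {0::real..}" by simp
  fix t x y :: real assume t: "0 < t" "t < 1" and xy: "x \<in> {0..}" "y \<in> {0..}" "x < y"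
  show "f ((1 - t) *\<^sub>R x + t *\<^sub>R y) \<le> (1 - t) * f x + t * f y"
  proof (cases "x = 0")
    case False
    then show ?thesis using convex_onD[OF cv, of t x y] t xy by simp
  next
    case True
    have L: "((\<lambda>e. f ((1 - t) * e + t * y)) \<longlongrightarrow> f ((1 - t) * 0 + t * y)) (at_right 0)"
    proof (rule continuous_on_tendsto_compose[OF ct])
      show "((\<lambda>e. (1 - t) * e + t * y) \<longlongrightarrow> (1 - t) * 0 + t * y) (at_right 0)"
        by (intro tendsto_intros)
      show "(1 - t) * 0 + t * y \<in> {0..}" using t xy by simp
      show "\<forall>\<^sub>F e in at_right 0. (1 - t) * e + t * y \<in> {0..}"
      proof (rule eventually_at_rightI[of 0 1])
        fix e :: real assume "e \<in> {0<..<1}"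
        then show "(1 - t) * e + t * y \<in> {0..}" using t xy by simp
      qed simp
    qed
    have R: "((\<lambda>e. (1 - t) * f e + t * f y) \<longlongrightarrow> (1 - t) * f 0 + t * f y) (at_right 0)"
    proof -
      have "(f \<longlongrightarrow> f 0) (at_right 0)"
      proof -
        have "(f \<longlongrightarrow> f 0) (at 0 within {0..})" using ct by (simp add: continuous_on_def)
        then show ?thesis by (rule tendsto_within_subset) auto
      qed
      then show ?thesis by (intro tendsto_intros)
    qed
    have E: "\<forall>\<^sub>F e in at_right 0. f ((1 - t) * e + t * y) \<le> (1 - t) * f e + t * f y"
    proof (rule eventually_at_rightI[of 0 1])
      fix e :: real assume "e \<in> {0<..<1}"
      then show "f ((1 - t) * e + t * y) \<le> (1 - t) * f e + t * f y"
        using convex_onD[OF cv, of t e y] t xy by simp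
    qed simp
    have "f ((1 - t) * 0 + t * y) \<le> (1 - t) * f 0 + t * f y"
      by (rule tendsto_le[OF trivial_limit_at_right_real R L E])
    then show ?thesis using True by simp
  qed
qed

lemma alg_aux:
  fixes x A B :: real assumes "x > 0"
  shows "((A * (inverse x / 2)) * (2 * x) - B * (2 * (inverse x / 2))) / ((2*x)*(2*x)) = (A - B/x) / (4 * x^2)"
  using assms by (simp add: field_simps power2_eq_square)

lemma phi_convex:
  fixes h :: "real \<Rightarrow> real"
  assumes d1: "\<forall>x. h differentiable at x" and d2: "\<forall>x. deriv h differentiable at x"
    and cond: "\<forall>x>0. deriv (deriv h) x > deriv h x / x"
  shows "convex_on {0..} (\<lambda>s. h (sqrt s))"
proof (rule convex_extend0)
  have hD: "(h has_real_derivative deriv h x) (at x)" for x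
    using d1 DERIV_deriv_iff_real_differentiable by blast
  have hD2: "(deriv h has_real_derivative deriv (deriv h) x) (at x)" for x
    using d2 DERIV_deriv_iff_real_differentiable by blast
  have "continuous_on UNIV h"
    using d1 by (simp add: continuous_at_imp_continuous_on differentiable_imp_continuous_within)
  then show "continuous_on {0..} (\<lambda>s. h (sqrt s))"
    by (rule continuous_on_compose2[OF _ continuous_on_real_sqrt]) auto
  show "convex_on {0<..} (\<lambda>s. h (sqrt s))"
  proof (rule f''_ge0_imp_convex[where f' = "\<lambda>s. deriv h (sqrt s) / (2 * sqrt s)"
      and f'' = "\<lambda>s. (deriv (deriv h) (sqrt s) - deriv h (sqrt s) / sqrt s) / (4 * s)"])
    show "convex {0::real<..}" by simp
    fix s :: real assume s: "s \<in> {0<..}"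
    then have s0: "s > 0" by simp
    have sq: "(sqrt has_real_derivative inverse (sqrt s) / 2) (at s)"
      using s0 by (rule DERIV_real_sqrt)
    have c1: "((\<lambda>s. h (sqrt s)) has_real_derivative deriv h (sqrt s) * (inverse (sqrt s) / 2)) (at s)"
      by (rule DERIV_chain2[OF hD sq])
    then show "((\<lambda>s. h (sqrt s)) has_real_derivative deriv h (sqrt s) / (2 * sqrt s)) (at s)"
      by (simp add: field_simps)
    have c2: "((\<lambda>s. deriv h (sqrt s)) has_real_derivative deriv (deriv h) (sqrt s) * (inverse (sqrt s) / 2)) (at s)"
      by (rule DERIV_chain2[OF hD2 sq])
    have c3: "((\<lambda>s. 2 * sqrt s) has_real_derivative 2 * (inverse (sqrt s) / 2)) (at s)"
      by (rule DERIV_cmult[OF sq])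
    have "((\<lambda>s. deriv h (sqrt s) / (2 * sqrt s)) has_real_derivative
       ((deriv (deriv h) (sqrt s) * (inverse (sqrt s) / 2)) * (2 * sqrt s) - deriv h (sqrt s) * (2 * (inverse (sqrt s) / 2))) / ((2 * sqrt s) * (2 * sqrt s))) (at s)"
      using s0 by (intro DERIV_divide c2 c3) simp
    moreover have "((deriv (deriv h) (sqrt s) * (inverse (sqrt s) / 2)) * (2 * sqrt s) - deriv h (sqrt s) * (2 * (inverse (sqrt s) / 2))) / ((2 * sqrt s) * (2 * sqrt s))
       = (deriv (deriv h) (sqrt s) - deriv h (sqrt s) / sqrt s) / (4 * s)"
      using alg_aux[of "sqrt s" "deriv (deriv h) (sqrt s)" "deriv h (sqrt s)"] s0 by simp
    ultimately show "((\<lambda>s. deriv h (sqrt s) / (2 * sqrt s)) has_real_derivative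
       (deriv (deriv h) (sqrt s) - deriv h (sqrt s) / sqrt s) / (4 * s)) (at s)" by simp
    have "deriv (deriv h) (sqrt s) > deriv h (sqrt s) / sqrt s" using cond s0 by simp
    then show "0 \<le> (deriv (deriv h) (sqrt s) - deriv h (sqrt s) / sqrt s) / (4 * s)"
      using s0 by simp
  qed
qed

lemma dim1_repr:
  fixes \<theta> g :: "'a::euclidean_space"
  assumes d: "DIM('a) = 1" and t: "\<theta> \<noteq> 0"
  shows "g = (inner (unit_dir \<theta>) g) *\<^sub>R unit_dir \<theta>"
proof -
  obtain b where B: "Basis = {b::'a}" using d by (metis card_1_singletonE)
  have bB: "b \<in> Basis" using B by blast
  have bb: "inner b b = 1" using bB by (simp add: inner_Basis)
  have rep: "x = (inner x b) *\<^sub>R b" for x :: 'a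
    using euclidean_representation[of x] unfolding B by simp
  define tt where "tt = inner \<theta> b"
  define u where "u = inner g b"
  have th: "\<theta> = tt *\<^sub>R b" using rep[of \<theta>] by (simp add: tt_def)
  have gg: "g = u *\<^sub>R b" using rep[of g] by (simp add: u_def)
  have tt0: "tt \<noteq> 0" using t th by auto
  have nb: "norm b = 1" using bb by (simp add: norm_eq_sqrt_inner)
  have nt: "norm \<theta> = \<bar>tt\<bar>" using th nb by simp
  define s where "s = tt / \<bar>tt\<bar>"
  have ss: "s * s = 1" using tt0 by (simp add: s_def field_simps abs_mult_self_eq)
  have ud: "unit_dir \<theta> = s *\<^sub>R b" using t nt th by (simp add: unit_dir_def s_def)
  have key: "inner (p *\<^sub>R b) (q *\<^sub>R b) = p * q" for p q using bb by simp
  have ip: "inner (s *\<^sub>R b) (u *\<^sub>R b) = s * u" by (rule key)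
  have "(inner (s *\<^sub>R b) (u *\<^sub>R b)) *\<^sub>R (s *\<^sub>R b) = ((s * s) * u) *\<^sub>R b"
    unfolding ip by (simp add: ac_simps)
  also have "\<dots> = u *\<^sub>R b" using ss by simp
  finally show ?thesis using gg ud by simp
qed

theorem lemma8:
  fixes \<theta> :: "'a::euclidean_space" and G :: real and h :: "real \<Rightarrow> real"
  assumes G_pos: "G > 0"
    and h_even: "\<forall>x. h (- x) = h x"
    and h_convex: "convex_on UNIV h"
    and h_incr: "mono_on {0..} h"
    and dim_cond: "DIM('a) = 1 \<or>
       (DIM('a) > 1 \<and> (\<forall>x. h differentiable at x) \<and> (\<forall>x. deriv h differentiable at x) \<and>
        (\<forall>x>0. deriv (deriv h) x > deriv h x / x))"
  shows "minimax_value h \<theta> G = (h (norm \<theta> + G) + h (norm \<theta> - G)) / 2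
    \<and> (let w = ((h (norm \<theta> + G) - h (norm \<theta> - G)) / (2 * G)) *\<^sub>R unit_dir \<theta> in
         worst_payoff h \<theta> G w = minimax_value h \<theta> G
         \<and> (\<forall>g. \<bar>inner \<theta> g\<bar> = G * norm \<theta> \<and> norm g = G \<longrightarrow>
               g \<in> adv_set G \<and> game_payoff h \<theta> w g = worst_payoff h \<theta> G w))"
proof -
  define r where "r = norm \<theta>"
  define c where "c = (h (r + G) - h (r - G)) / (2 * G)"
  define V where "V = (h (r + G) + h (r - G)) / 2"
  define u where "u = unit_dir \<theta>"
  define w where "w = c *\<^sub>R u"
  have r0: "r \<ge> 0" by (simp add: r_def)
  have hev: "h \<bar>x\<bar> = h x" for x using h_even by (cases "x \<ge> 0") (auto simp: abs_if)
  have hmono: "h x \<le> h y" if "0 \<le> x" "x \<le> y" for x y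
    using h_incr that by (auto intro: mono_onD)
  have nu: "\<theta> \<noteq> 0 \<Longrightarrow> norm u = 1" by (simp add: u_def unit_dir_def)
  have thu: "\<theta> = r *\<^sub>R u" by (simp add: u_def unit_dir_def r_def)
  have ndiff: "norm (\<theta> - g)^2 = r^2 - 2 * inner \<theta> g + (norm g)^2" for g
    by (simp add: r_def power2_norm_eq_inner inner_diff_left inner_diff_right inner_commute)
  have adv0: "0 \<in> adv_set G" using G_pos by (simp add: adv_set_def)
  have bdd: "bdd_above ((\<lambda>g. game_payoff h \<theta> w' g) ` adv_set G)" for w'
  proof (rule bdd_aboveI2)
    fix g :: 'a assume g: "g \<in> adv_set G"
    then have ng: "norm g \<le> G" by (simp add: adv_set_def)
    have "inner w' g \<le> norm w' * norm g" by (rule norm_cauchy_schwarz)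
    also have "\<dots> \<le> norm w' * G" using ng by (simp add: mult_left_mono)
    finally have i1: "inner w' g \<le> norm w' * G" .
    have "norm (\<theta> - g) \<le> r + G" using norm_triangle_ineq4[of \<theta> g] ng by (simp add: r_def)
    then have "h (norm (\<theta> - g)) \<le> h (r + G)" by (intro hmono) auto
    with i1 show "game_payoff h \<theta> w' g \<le> norm w' * G + h (r + G)"
      by (simp add: game_payoff_def)
  qed
  have lower: "V \<le> worst_payoff h \<theta> G w'" for w'
  proof -
    define e where "e = (if \<theta> = 0 then (SOME b. b \<in> (Basis::'a set)) else u)"
    have ne: "norm e = 1"
    proof (cases "\<theta> = 0")
      case True
      have "(SOME b. b \<in> (Basis::'a set)) \<in> Basis" by (rule someI_ex) (use nonempty_Basis in blast)
      then show ?thesis using True by (simp add: e_def)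
    qed (simp add: e_def nu)
    have the: "\<theta> = r *\<^sub>R e" using thu by (cases "\<theta> = 0") (auto simp: e_def r_def)
    have g1: "G *\<^sub>R e \<in> adv_set G" "(- G) *\<^sub>R e \<in> adv_set G" using ne G_pos by (auto simp: adv_set_def)
    have "game_payoff h \<theta> w' (G *\<^sub>R e) \<le> worst_payoff h \<theta> G w'"
      unfolding worst_payoff_def by (rule cSUP_upper[OF g1(1) bdd])
    moreover have "game_payoff h \<theta> w' ((- G) *\<^sub>R e) \<le> worst_payoff h \<theta> G w'"
      unfolding worst_payoff_def by (rule cSUP_upper[OF g1(2) bdd])
    moreover have "\<theta> - G *\<^sub>R e = (r - G) *\<^sub>R e" "\<theta> - (-G) *\<^sub>R e = (r + G) *\<^sub>R e"
      using the by (simp_all add: algebra_simps)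
    then have "game_payoff h \<theta> w' (G *\<^sub>R e) + game_payoff h \<theta> w' ((- G) *\<^sub>R e) = 2 * V"
      using ne by (simp add: game_payoff_def V_def hev)
    ultimately show ?thesis by simp
  qed
  have upper: "game_payoff h \<theta> w g \<le> V" if g: "g \<in> adv_set G" for g
  proof -
    have ng: "norm g \<le> G" using g by (simp add: adv_set_def)
    show ?thesis
    proof (cases "\<theta> = 0")
      case True
      then have "w = 0" "r = 0" by (simp_all add: w_def u_def unit_dir_def r_def)
      then show ?thesis using True ng hmono[of "norm g" G] h_even
        by (simp add: game_payoff_def V_def)
    next
      case False
      define a where "a = inner u g"
      have nu1: "norm u = 1" using nu False .
      have "\<bar>a\<bar> \<le> norm u * norm g" unfolding a_def by (rule Cauchy_Schwarz_ineq2)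
      then have aG: "-G \<le> a" "a \<le> G" using nu1 ng by auto
      have iw: "inner w g = c * a" by (simp add: w_def a_def)
      have itg: "inner \<theta> g = r * a" using thu by (metis a_def inner_scaleR_left)
      show ?thesis
      proof (cases "DIM('a) = 1")
        case True
        have "g = a *\<^sub>R u" using dim1_repr[OF True False, of g] by (simp add: a_def u_def)
        then have "\<theta> - g = (r - a) *\<^sub>R u" using thu by (simp add: algebra_simps)
        then have pay: "game_payoff h \<theta> w g = c * a + h (r + (-1) * a)"
          using nu1 iw by (simp add: game_payoff_def hev)
        have cv: "convex_on {-G..G} (\<lambda>a. h (r + (-1) * a))"
          by (rule convex_affine_comp[OF h_convex]) auto
        have "(h (r + (-1) * (-G)) - h (r + (-1) * G)) / (2*G) * a + h (r + (-1) * a)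
              \<le> (h (r + (-1) * (-G)) + h (r + (-1) * G)) / 2"
          by (rule chord[OF cv G_pos aG])
        then show ?thesis using pay by (simp add: c_def V_def)
      next
        case False
        with dim_cond have dc: "(\<forall>x. h differentiable at x) \<and> (\<forall>x. deriv h differentiable at x) \<and>
          (\<forall>x>0. deriv (deriv h) x > deriv h x / x)" by auto
        have pc: "convex_on {0..} (\<lambda>s. h (sqrt s))" using dc by (intro phi_convex) auto
        have mp: "(r^2 + G^2) + (-2*r) * x \<in> {0..}" if "x \<in> {-G..G}" for x
        proof -
          have "r * x \<le> r * G" using that r0 by (simp add: mult_left_mono)
          then have "(r^2 + G^2) + (-2*r) * x \<ge> (r - G)^2" by (simp add: power2_diff)
          then have "0 \<le> (r^2 + G^2) + (-2*r) * x" using zero_le_power2[of "r - G"] by linarith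
          then show ?thesis by simp
        qed
        have cv: "convex_on {-G..G} (\<lambda>a. h (sqrt ((r^2 + G^2) + (-2*r) * a)))"
          by (rule convex_affine_comp[OF pc _ mp]) auto
        have ch: "(h (sqrt ((r^2 + G^2) + (-2*r) * (-G))) - h (sqrt ((r^2 + G^2) + (-2*r) * G))) / (2*G) * a
             + h (sqrt ((r^2 + G^2) + (-2*r) * a))
              \<le> (h (sqrt ((r^2 + G^2) + (-2*r) * (-G))) + h (sqrt ((r^2 + G^2) + (-2*r) * G))) / 2"
          by (rule chord[OF cv G_pos aG])
        have e1: "(r^2 + G^2) + (-2*r) * (-G) = (r + G)^2" by (simp add: power2_sum)
        have e2: "(r^2 + G^2) + (-2*r) * G = (r - G)^2" by (simp add: power2_diff)
        have "norm (\<theta> - g) = sqrt ((norm (\<theta> - g))^2)" by simp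
        also have "\<dots> \<le> sqrt ((r^2 + G^2) + (-2*r) * a)"
        proof (rule real_sqrt_le_mono)
          have "(norm g)^2 \<le> G^2" using ng by (simp add: power_mono)
          then show "(norm (\<theta> - g))^2 \<le> (r^2 + G^2) + (-2*r) * a"
            using ndiff[of g] itg by simp
        qed
        finally have "h (norm (\<theta> - g)) \<le> h (sqrt ((r^2 + G^2) + (-2*r) * a))"
          by (intro hmono) auto
        then show ?thesis using ch iw unfolding e1 e2
          by (simp add: game_payoff_def c_def V_def hev)
      qed
    qed
  qed
  have ww: "worst_payoff h \<theta> G w = V"
  proof (rule antisym)
    show "worst_payoff h \<theta> G w \<le> V"
      unfolding worst_payoff_def using adv0 upper by (intro cSUP_least) auto
  qed (rule lower)
  have mm: "minimax_value h \<theta> G = V"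
  proof (rule antisym)
    have "minimax_value h \<theta> G \<le> worst_payoff h \<theta> G w"
    proof -
      have "bdd_below (range (worst_payoff h \<theta> G))"
        by (rule bdd_belowI2[where m=V]) (rule lower)
      then show ?thesis unfolding minimax_value_def by (rule cINF_lower) simp
    qed
    then show "minimax_value h \<theta> G \<le> V" using ww by simp
    show "V \<le> minimax_value h \<theta> G"
      unfolding minimax_value_def by (rule cINF_greatest) (use lower in auto)
  qed
  have last: "g \<in> adv_set G \<and> game_payoff h \<theta> w g = V"
    if g: "\<bar>inner \<theta> g\<bar> = G * norm \<theta>" "norm g = G" for g
  proof
    show "g \<in> adv_set G" using g by (simp add: adv_set_def)
    show "game_payoff h \<theta> w g = V"
    proof (cases "\<theta> = 0")
      case True
      then have "w = 0" "r = 0" by (simp_all add: w_def u_def unit_dir_def r_def)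
      then show ?thesis using True g h_even by (simp add: game_payoff_def V_def)
    next
      case False
      then have rp: "r > 0" by (simp add: r_def)
      have iw: "inner w g = c * (inner \<theta> g / r)"
        using False by (simp add: w_def u_def unit_dir_def r_def)
      have nd: "norm (\<theta> - g)^2 = r^2 - 2 * inner \<theta> g + G^2" using ndiff[of g] g by simp
      from g(1) have "inner \<theta> g = G * r \<or> inner \<theta> g = - (G * r)" by (auto simp: r_def abs_if split: if_splits)
      then show ?thesis
      proof
        assume i: "inner \<theta> g = G * r"
        then have "norm (\<theta> - g)^2 = (r - G)^2" using nd by (simp add: power2_diff)
        then have "norm (\<theta> - g) = \<bar>r - G\<bar>" by (metis norm_ge_zero real_sqrt_abs real_sqrt_unique)
        moreover have "inner w g = c * G" using iw i rp by simp
        moreover have "c * G = (h (r + G) - h (r - G)) / 2" using G_pos by (simp add: c_def)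
        ultimately show ?thesis by (simp add: game_payoff_def V_def hev)
      next
        assume i: "inner \<theta> g = - (G * r)"
        then have "norm (\<theta> - g)^2 = (r + G)^2" using nd by (simp add: power2_sum)
        then have "norm (\<theta> - g) = \<bar>r + G\<bar>" by (metis norm_ge_zero real_sqrt_abs real_sqrt_unique)
        moreover have "inner w g = - (c * G)" using iw i rp by simp
        moreover have "c * G = (h (r + G) - h (r - G)) / 2" using G_pos by (simp add: c_def)
        moreover have "\<bar>r + G\<bar> = r + G" using rp G_pos by simp
        ultimately have "game_payoff h \<theta> w g = - (c * G) + h (r + G)"
          "c * G = (h (r + G) - h (r - G)) / 2" by (simp_all add: game_payoff_def)
        then have "game_payoff h \<theta> w g = - ((h (r + G) - h (r - G)) / 2) + h (r + G)" by simp
        also have "\<dots> = V" unfolding V_def by (simp add: field_simps)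
        finally show ?thesis .
      qed
    qed
  qed
  have F: "minimax_value h \<theta> G = V \<and> worst_payoff h \<theta> G w = minimax_value h \<theta> G
     \<and> (\<forall>g. \<bar>inner \<theta> g\<bar> = G * norm \<theta> \<and> norm g = G \<longrightarrow>
               g \<in> adv_set G \<and> game_payoff h \<theta> w g = worst_payoff h \<theta> G w)"
    using mm ww last by auto
  show ?thesis
    using F unfolding Let_def V_def c_def r_def w_def u_def .
qed

end
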